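(* Let $(\lambda^*,\xi^* )$ be a maximizer of $L$, and let $(\lambda^{(1)},\xi^{(1)})$ be given by $\lambda^{(1)}=0$, $\xi^{(1)}_{ij}=\log\sum_{x_i,x_j}e^{-\eta C_{ij}(x_i,x_j)}$ for $ij\in\mathcal E$ and $\xi^{(1)}_i=\log\sum_xe^{-\eta C_i(x)}$ for $i\in\mathcal V$. Then $L(\lambda^*,\xi^* )-L(\lambda^{(1)},\xi^{(1)})\le\min\big(\|\eta C/d+\exp(-\eta C)\|_1,\,S\big)$, where $S=\sum_{ij\in\mathcal E}\Big[\log\sum_{x_i,x_j}e^{-\eta C_{ij}(x_i,x_j)}+\sum_{x_i,x_j}\frac{\eta}{d^2}C_{ij}(x_i,x_j)\Big]+\sum_{i\in\mathcal V}\Big[\log\sum_xe^{-\eta C_i(x)}+\sum_x\frac{\eta}{d}C_i(x)\Big]$.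
   Context: Let $G=(\mathcal V,\mathcal E)$ be a graph with $\mathcal V=\{1,\dots,n\}$, each vertex on at least one edge, edges written as ordered pairs $ij$, $N(i)$ the neighbours of $i$, $\chi=\{0,\dots,d-1\}$, $\eta>0$, and $C$ a cost vector with components $C_i\in\mathbb R^d$, $C_{ij}\in\mathbb R^{d\times d}$; $\exp$ is entrywise and $\|\cdot\|_1$ is the sum of absolute values of all entries. Dual variables $(\lambda,\xi)$: for each edge $ij$, $\lambda_{ij},\lambda_{ji}\in\mathbb R^d$ (associated with $i$ and $j$ respectively) and $\xi_{ij}\in\mathbb R$; for each vertex $\xi_i\in\mathbb R$. With $\Gamma_{ij}(x_i,x_j)=\exp(-\eta C_{ij}(x_i,x_j)-\lambda_{ij}(x_i)-\lambda_{ji}(x_j)-\xi_{ij})$ and $\Gamma_i(x)=\exp(-\eta C_i(x)-\xi_i+\sum_{j\in N(i)}\lambda_{ij}(x))$, the Lyapunov function is $L(\lambda,\xi)=-\sum_{ij}\sum_{x_i,x_j}\Gamma_{ij}(x_i,x_j)-\sum_i\sum_x\Gamma_i(x)-\sum_{ij}\xi_{ij}-\sum_i\xi_i+\sum_{ij}\sum_{x_i,x_j}e^{-\eta C_{ij}(x_i,x_j)}+\sum_i\sum_xe^{-\eta C_i(x)}$. *)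

theory Defs
  imports Complex_Main
begin

(* Vertices are {1..n}; edges E :: (nat \<times> nat) set of ordered pairs (i,j);
   states x range over {..<d}.
   Duals: lam i j x = lambda_ij(x)  (associated with vertex i on edge {i,j}),
          xe i j = xi_ij,  xv i = xi_i. *)

definition nbrs :: "(nat \<times> nat) set \<Rightarrow> nat \<Rightarrow> nat set" where
  "nbrs E i = {j. (i, j) \<in> E \<or> (j, i) \<in> E}"

definition Gamma_e ::
  "real \<Rightarrow> (nat \<Rightarrow> nat \<Rightarrow> nat \<Rightarrow> nat \<Rightarrow> real) \<Rightarrow> (nat \<Rightarrow> nat \<Rightarrow> nat \<Rightarrow> real)
   \<Rightarrow> (nat \<Rightarrow> nat \<Rightarrow> real) \<Rightarrow> nat \<Rightarrow> nat \<Rightarrow> nat \<Rightarrow> nat \<Rightarrow> real" where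
  "Gamma_e \<eta> Ce lam xe i j x y =
     exp (- \<eta> * Ce i j x y - lam i j x - lam j i y - xe i j)"

definition Gamma_v ::
  "(nat \<times> nat) set \<Rightarrow> real \<Rightarrow> (nat \<Rightarrow> nat \<Rightarrow> real) \<Rightarrow> (nat \<Rightarrow> nat \<Rightarrow> nat \<Rightarrow> real)
   \<Rightarrow> (nat \<Rightarrow> real) \<Rightarrow> nat \<Rightarrow> nat \<Rightarrow> real" where
  "Gamma_v E \<eta> Cv lam xv i x =
     exp (- \<eta> * Cv i x - xv i + (\<Sum>j\<in>nbrs E i. lam i j x))"

definition Lyap ::
  "nat \<Rightarrow> (nat \<times> nat) set \<Rightarrow> nat \<Rightarrow> real
   \<Rightarrow> (nat \<Rightarrow> nat \<Rightarrow> nat \<Rightarrow> nat \<Rightarrow> real) \<Rightarrow> (nat \<Rightarrow> nat \<Rightarrow> real)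
   \<Rightarrow> (nat \<Rightarrow> nat \<Rightarrow> nat \<Rightarrow> real) \<Rightarrow> (nat \<Rightarrow> nat \<Rightarrow> real) \<Rightarrow> (nat \<Rightarrow> real) \<Rightarrow> real" where
  "Lyap n E d \<eta> Ce Cv lam xe xv =
     - (\<Sum>(i, j)\<in>E. \<Sum>x<d. \<Sum>y<d. Gamma_e \<eta> Ce lam xe i j x y)
     - (\<Sum>i\<in>{1..n}. \<Sum>x<d. Gamma_v E \<eta> Cv lam xv i x)
     - (\<Sum>(i, j)\<in>E. xe i j)
     - (\<Sum>i\<in>{1..n}. xv i)
     + (\<Sum>(i, j)\<in>E. \<Sum>x<d. \<Sum>y<d. exp (- \<eta> * Ce i j x y))
     + (\<Sum>i\<in>{1..n}. \<Sum>x<d. exp (- \<eta> * Cv i x))"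

definition norm1_term ::
  "nat \<Rightarrow> (nat \<times> nat) set \<Rightarrow> nat \<Rightarrow> real
   \<Rightarrow> (nat \<Rightarrow> nat \<Rightarrow> nat \<Rightarrow> nat \<Rightarrow> real) \<Rightarrow> (nat \<Rightarrow> nat \<Rightarrow> real) \<Rightarrow> real" where
  "norm1_term n E d \<eta> Ce Cv =
     (\<Sum>(i, j)\<in>E. \<Sum>x<d. \<Sum>y<d. \<bar>\<eta> * Ce i j x y / real d + exp (- \<eta> * Ce i j x y)\<bar>)
     + (\<Sum>i\<in>{1..n}. \<Sum>x<d. \<bar>\<eta> * Cv i x / real d + exp (- \<eta> * Cv i x)\<bar>)"

definition S_term ::
  "nat \<Rightarrow> (nat \<times> nat) set \<Rightarrow> nat \<Rightarrow> real
   \<Rightarrow> (nat \<Rightarrow> nat \<Rightarrow> nat \<Rightarrow> nat \<Rightarrow> real) \<Rightarrow> (nat \<Rightarrow> nat \<Rightarrow> real) \<Rightarrow> real" where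
  "S_term n E d \<eta> Ce Cv =
     (\<Sum>(i, j)\<in>E. ln (\<Sum>x<d. \<Sum>y<d. exp (- \<eta> * Ce i j x y))
                   + (\<Sum>x<d. \<Sum>y<d. \<eta> / (real d)^2 * Ce i j x y))
     + (\<Sum>i\<in>{1..n}. ln (\<Sum>x<d. exp (- \<eta> * Cv i x))
                   + (\<Sum>x<d. \<eta> / real d * Cv i x))"

end

theory Submission imports Defs begin

lemma tang:
  fixes A :: "'a set" and f :: "'a \<Rightarrow> real"
  assumes "finite A" "A \<noteq> {}"
  shows "1 + ln (real (card A)) + (\<Sum>a\<in>A. f a) / real (card A) - \<xi> \<le> (\<Sum>a\<in>A. exp (f a - \<xi>))"
proof -
  define k where "k = real (card A)"
  have kp: "k > 0" using assms by (simp add: k_def card_gt_0_iff)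
  have pt: "(1 + f a - \<xi> + ln k) / k \<le> exp (f a - \<xi>)" for a
  proof -
    have "1 + (f a - \<xi> + ln k) \<le> exp (f a - \<xi> + ln k)" by (rule exp_ge_add_one_self)
    also have "\<dots> = exp (f a - \<xi>) * k" using kp by (simp add: exp_add)
    finally show ?thesis using kp by (simp add: divide_le_eq algebra_simps)
  qed
  have "(\<Sum>a\<in>A. (1 + f a - \<xi> + ln k) / k) \<le> (\<Sum>a\<in>A. exp (f a - \<xi>))"
    by (rule sum_mono) (rule pt)
  moreover have "(\<Sum>a\<in>A. (1 + f a - \<xi> + ln k) / k) = (k * (1 - \<xi> + ln k) + (\<Sum>a\<in>A. f a)) / k"
  proof -
    have "(\<Sum>a\<in>A. (1 + f a - \<xi> + ln k)) = (\<Sum>a\<in>A. (1 - \<xi> + ln k)) + (\<Sum>a\<in>A. f a)"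
    proof -
      have "(\<Sum>a\<in>A. (1 + f a - \<xi> + ln k)) = (\<Sum>a\<in>A. (1 - \<xi> + ln k) + f a)"
        by (rule sum.cong) auto
      thus ?thesis by (simp only: sum.distrib)
    qed
    also have "\<dots> = k * (1 - \<xi> + ln k) + (\<Sum>a\<in>A. f a)" by (simp add: k_def)
    finally show ?thesis by (simp add: sum_divide_distrib[symmetric])
  qed
  moreover have "\<dots> = 1 + ln k + (\<Sum>a\<in>A. f a) / k - \<xi>" using kp by (simp add: field_simps)
  ultimately show ?thesis by (simp add: k_def)
qed

lemma entry:
  fixes c D K :: real
  assumes "1 \<le> D" "D \<le> K"
  shows "(exp (- c) + c) / K \<le> \<bar>c / D + exp (- c)\<bar>"
proof (cases "c \<ge> 0")
  case True
  have "exp (-c) / K \<le> exp (-c)" using assms by (simp add: divide_le_eq)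
  moreover have "c / K \<le> c / D" using assms True by (simp add: frac_le)
  ultimately show ?thesis by (simp add: add_divide_distrib) 
next
  case False
  have e: "exp (-c) \<ge> -c" using exp_ge_add_one_self[of "-c"] by linarith
  have "(-c) * (1/D - 1/K) \<le> exp (-c) * (1 - 1/K)"
    apply (rule mult_mono) using e assms False by (auto simp: divide_le_eq field_simps)
  hence "(exp (- c) + c) / K \<le> c / D + exp (- c)" by (simp add: field_simps add_divide_distrib)
  thus ?thesis by linarith
qed

lemma edge_ineq:
  assumes d: "d > 0"
  shows "1 + 2 * ln (real d) - (\<Sum>x<d. \<Sum>y<d. \<eta> / (real d)^2 * Ce i j x y)
     - (\<Sum>x<d. lam i j x) / real d - (\<Sum>x<d. lam j i x) / real d - xe i j
     \<le> (\<Sum>x<d. \<Sum>y<d. Gamma_e \<eta> Ce lam xe i j x y)"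
proof -
  let ?A = "{..<d} \<times> {..<d}"
  let ?f = "\<lambda>(x,y). - \<eta> * Ce i j x y - lam i j x - lam j i y"
  have t: "1 + ln (real (card ?A)) + (\<Sum>a\<in>?A. ?f a) / real (card ?A) - xe i j \<le> (\<Sum>a\<in>?A. exp (?f a - xe i j))"
    by (rule tang) (use d in auto)
  have r1: "(\<Sum>a\<in>?A. exp (?f a - xe i j)) = (\<Sum>x<d. \<Sum>y<d. Gamma_e \<eta> Ce lam xe i j x y)"
    by (simp add: sum.cartesian_product Gamma_e_def split_def)
  have r2: "ln (real (card ?A)) = 2 * ln (real d)"
    using d by (simp add: card_cartesian_product ln_mult)
  have r3: "(\<Sum>a\<in>?A. ?f a) = (\<Sum>x<d. \<Sum>y<d. - \<eta> * Ce i j x y) - real d * (\<Sum>x<d. lam i j x) - real d * (\<Sum>x<d. lam j i x)"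
    by (simp add: sum.cartesian_product[symmetric] sum_subtractf sum_distrib_left sum.swap[of "\<lambda>x y. lam j i y"])
  have r4: "(\<Sum>x<d. \<Sum>y<d. - \<eta> * Ce i j x y) / (real d * real d) = - (\<Sum>x<d. \<Sum>y<d. \<eta> / (real d)^2 * Ce i j x y)"
    by (simp add: sum_divide_distrib power2_eq_square sum_negf)
  have r5: "(\<Sum>a\<in>?A. ?f a) / real (card ?A) = - (\<Sum>x<d. \<Sum>y<d. \<eta> / (real d)^2 * Ce i j x y)
     - (\<Sum>x<d. lam i j x) / real d - (\<Sum>x<d. lam j i x) / real d"
    using d r4 unfolding r3 by (simp add: card_cartesian_product diff_divide_distrib)
  show ?thesis using t r1 r2 r5 by simp
qed

lemma vert_ineq:
  assumes d: "d > 0"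
  shows "1 + ln (real d) - (\<Sum>x<d. \<eta> / real d * Cv i x)
     + (\<Sum>j\<in>nbrs E i. \<Sum>x<d. lam i j x) / real d - xv i
     \<le> (\<Sum>x<d. Gamma_v E \<eta> Cv lam xv i x)"
proof -
  let ?f = "\<lambda>x. - \<eta> * Cv i x + (\<Sum>j\<in>nbrs E i. lam i j x)"
  have t: "1 + ln (real (card {..<d})) + (\<Sum>a\<in>{..<d}. ?f a) / real (card {..<d}) - xv i \<le> (\<Sum>a\<in>{..<d}. exp (?f a - xv i))"
    by (rule tang) (use d in auto)
  have r1: "(\<Sum>a\<in>{..<d}. exp (?f a - xv i)) = (\<Sum>x<d. Gamma_v E \<eta> Cv lam xv i x)"
    by (rule sum.cong) (auto simp: Gamma_v_def algebra_simps)
  have r3: "(\<Sum>a\<in>{..<d}. ?f a) / real d = - (\<Sum>x<d. \<eta> / real d * Cv i x) + (\<Sum>j\<in>nbrs E i. \<Sum>x<d. lam i j x) / real d"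
  proof -
    have "(\<Sum>a\<in>{..<d}. ?f a) = - (\<Sum>x<d. \<eta> * Cv i x) + (\<Sum>j\<in>nbrs E i. \<Sum>x<d. lam i j x)"
      by (simp add: sum.distrib sum_subtractf sum_negf sum.swap[of _ "nbrs E i"])
    moreover have "(\<Sum>x<d. \<eta> / real d * Cv i x) = (\<Sum>x<d. \<eta> * Cv i x) / real d"
      by (simp add: sum_divide_distrib)
    ultimately show ?thesis by (simp only: diff_divide_distrib add_divide_distrib)
  qed
  show ?thesis using t r1 r3 by simp
qed

lemma sE_add: "(\<Sum>(i,j)\<in>E. f i j + g i j) = (\<Sum>(i,j)\<in>E. f i j) + (\<Sum>(i,j)\<in>E. (g i j :: real))"
  by (simp add: split_def sum.distrib)
lemma sE_diff: "(\<Sum>(i,j)\<in>E. f i j - g i j) = (\<Sum>(i,j)\<in>E. f i j) - (\<Sum>(i,j)\<in>E. (g i j :: real))"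
  by (simp add: split_def sum_subtractf)
lemma sE_div: "(\<Sum>(i,j)\<in>E. f i j / c) = (\<Sum>(i,j)\<in>E. f i j) / (c::real)"
  by (simp add: split_def sum_divide_distrib)
lemma sE_mono: "(\<And>i j. (i,j) \<in> E \<Longrightarrow> f i j \<le> g i j) \<Longrightarrow> (\<Sum>(i,j)\<in>E. f i j) \<le> (\<Sum>(i,j)\<in>E. (g i j :: real))"
  by (rule sum_mono) auto

lemma cancel:
  assumes E_sub: "E \<subseteq> {1..n} \<times> {1..n}"
    and no_dup: "\<And>i j. (i, j) \<in> E \<Longrightarrow> (j, i) \<notin> E"
  shows "(\<Sum>i\<in>{1..n}. \<Sum>j\<in>nbrs E i. g i j) = (\<Sum>(i,j)\<in>E. g i j + (g j i :: real))"
proof -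
  have finE: "finite E" using E_sub finite_subset by blast
  have nb: "nbrs E i \<subseteq> {1..n}" for i using E_sub by (auto simp: nbrs_def)
  have "(\<Sum>i\<in>{1..n}. \<Sum>j\<in>nbrs E i. g i j) = (\<Sum>(i,j)\<in>Sigma {1..n} (nbrs E). g i j)"
    by (rule sum.Sigma) (use nb in \<open>auto intro: finite_subset[OF nb]\<close>)
  also have "Sigma {1..n} (nbrs E) = E \<union> prod.swap ` E"
    using E_sub by (auto simp: nbrs_def image_iff) (metis swap_simp)
  also have "(\<Sum>(i,j)\<in>E \<union> prod.swap ` E. g i j) = (\<Sum>(i,j)\<in>E. g i j) + (\<Sum>(i,j)\<in>prod.swap ` E. g i j)"
    by (rule sum.union_disjoint) (use finE no_dup in auto)
  also have "(\<Sum>(i,j)\<in>prod.swap ` E. g i j) = (\<Sum>(i,j)\<in>E. g j i)"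
    by (subst sum.reindex) (auto simp: split_def)
  finally show ?thesis by (simp only: sE_add)
qed

theorem lemma2:
  fixes n d :: nat and E :: "(nat \<times> nat) set" and \<eta> :: real
    and Ce :: "nat \<Rightarrow> nat \<Rightarrow> nat \<Rightarrow> nat \<Rightarrow> real" and Cv :: "nat \<Rightarrow> nat \<Rightarrow> real"
    and lam_s :: "nat \<Rightarrow> nat \<Rightarrow> nat \<Rightarrow> real" and xe_s :: "nat \<Rightarrow> nat \<Rightarrow> real"
    and xv_s :: "nat \<Rightarrow> real"
  assumes E_sub: "E \<subseteq> {1..n} \<times> {1..n}"
    and no_loop: "\<And>i j. (i, j) \<in> E \<Longrightarrow> i \<noteq> j"
    and no_dup: "\<And>i j. (i, j) \<in> E \<Longrightarrow> (j, i) \<notin> E"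
    and covered: "\<And>i. i \<in> {1..n} \<Longrightarrow> \<exists>j. (i, j) \<in> E \<or> (j, i) \<in> E"
    and d_pos: "d > 0"
    and eta_pos: "\<eta> > 0"
    and maximizer: "\<And>lam xe xv. Lyap n E d \<eta> Ce Cv lam xe xv \<le> Lyap n E d \<eta> Ce Cv lam_s xe_s xv_s"
  shows "Lyap n E d \<eta> Ce Cv lam_s xe_s xv_s
           - Lyap n E d \<eta> Ce Cv (\<lambda>i j x. 0)
               (\<lambda>i j. ln (\<Sum>x<d. \<Sum>y<d. exp (- \<eta> * Ce i j x y)))
               (\<lambda>i. ln (\<Sum>x<d. exp (- \<eta> * Cv i x)))
         \<le> min (norm1_term n E d \<eta> Ce Cv) (S_term n E d \<eta> Ce Cv)"
proof -
  define Ze where "Ze i j = (\<Sum>x<d. \<Sum>y<d. exp (- \<eta> * Ce i j x y))" for i j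
  define Zv where "Zv i = (\<Sum>x<d. exp (- \<eta> * Cv i x))" for i
  define CE where "CE i j = (\<Sum>x<d. \<Sum>y<d. \<eta> / (real d)^2 * Ce i j x y)" for i j
  define CV where "CV i = (\<Sum>x<d. \<eta> / real d * Cv i x)" for i
  define La where "La i j = (\<Sum>x<d. lam_s i j x)" for i j
  define D where "D = real d"
  have Dp: "D \<ge> 1" using d_pos by (simp add: D_def)
  have Zep: "Ze i j > 0" for i j unfolding Ze_def using d_pos
    by (intro sum_pos) auto
  have Zvp: "Zv i > 0" for i unfolding Zv_def using d_pos
    by (intro sum_pos) auto
  let ?Ls = "Lyap n E d \<eta> Ce Cv lam_s xe_s xv_s"
  let ?L1 = "Lyap n E d \<eta> Ce Cv (\<lambda>i j x. 0)
               (\<lambda>i j. ln (\<Sum>x<d. \<Sum>y<d. exp (- \<eta> * Ce i j x y)))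
               (\<lambda>i. ln (\<Sum>x<d. exp (- \<eta> * Cv i x)))"
  define ZE where "ZE = (\<Sum>(i, j)\<in>E. \<Sum>x<d. \<Sum>y<d. exp (- \<eta> * Ce i j x y))"
  define ZV where "ZV = (\<Sum>i\<in>{1..n}. \<Sum>x<d. exp (- \<eta> * Cv i x))"
  define A1 where "A1 = (\<Sum>(i, j)\<in>E. \<Sum>x<d. \<Sum>y<d. Gamma_e \<eta> Ce lam_s xe_s i j x y)"
  define A2 where "A2 = (\<Sum>(i, j)\<in>E. xe_s i j)"
  define B1 where "B1 = (\<Sum>i\<in>{1..n}. \<Sum>x<d. Gamma_v E \<eta> Cv lam_s xv_s i x)"
  define B2 where "B2 = (\<Sum>i\<in>{1..n}. xv_s i)"
  have Ls: "?Ls = - A1 - B1 - A2 - B2 + ZE + ZV"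
    unfolding Lyap_def A1_def A2_def B1_def B2_def ZE_def ZV_def by simp
  have e1: "(\<Sum>x<d. \<Sum>y<d. Gamma_e \<eta> Ce (\<lambda>i j x. 0) (\<lambda>i j. ln (Ze i j)) i j x y) = 1" for i j
  proof -
    have "(\<Sum>x<d. \<Sum>y<d. Gamma_e \<eta> Ce (\<lambda>i j x. 0) (\<lambda>i j. ln (Ze i j)) i j x y)
        = (\<Sum>x<d. \<Sum>y<d. exp (- \<eta> * Ce i j x y) / Ze i j)"
      using Zep[of i j] by (simp add: Gamma_e_def exp_diff)
    also have "\<dots> = Ze i j / Ze i j"
    proof -
      have g: "(\<Sum>x<d. \<Sum>y<d. exp (- \<eta> * Ce i j x y) / z) = Ze i j / z" for z
        by (simp add: Ze_def sum_divide_distrib)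
      show ?thesis by (rule g)
    qed
    finally show ?thesis using Zep[of i j] by simp
  qed
  have v1: "(\<Sum>x<d. Gamma_v E \<eta> Cv (\<lambda>i j x. 0) (\<lambda>i. ln (Zv i)) i x) = 1" for i
  proof -
    have "(\<Sum>x<d. Gamma_v E \<eta> Cv (\<lambda>i j x. 0) (\<lambda>i. ln (Zv i)) i x)
        = (\<Sum>x<d. exp (- \<eta> * Cv i x) / Zv i)"
      using Zvp[of i] by (simp add: Gamma_v_def exp_diff)
    also have "\<dots> = Zv i / Zv i"
    proof -
      have g: "(\<Sum>x<d. exp (- \<eta> * Cv i x) / z) = Zv i / z" for z
        by (simp add: Zv_def sum_divide_distrib)
      show ?thesis by (rule g)
    qed
    finally show ?thesis using Zvp[of i] by simp
  qed
  have L1: "?L1 = ZE + ZV - (\<Sum>(i,j)\<in>E. 1 + ln (Ze i j)) - (\<Sum>i\<in>{1..n}. 1 + ln (Zv i))"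
  proof -
    have "?L1 = - (\<Sum>(i,j)\<in>E. 1) - (\<Sum>i\<in>{1..n}. 1) - (\<Sum>(i,j)\<in>E. ln (Ze i j)) - (\<Sum>i\<in>{1..n}. ln (Zv i)) + ZE + ZV"
      unfolding Lyap_def ZE_def ZV_def Ze_def[symmetric] Zv_def[symmetric] e1 v1 by simp
    moreover have "(\<Sum>(i,j)\<in>E. 1 + ln (Ze i j)) = (\<Sum>(i,j)\<in>E. 1) + (\<Sum>(i,j)\<in>E. ln (Ze i j))"
      by (rule sE_add)
    moreover have "(\<Sum>i\<in>{1..n}. 1 + ln (Zv i)) = (\<Sum>i\<in>{1..n}. 1) + (\<Sum>i\<in>{1..n}. ln (Zv i))"
      by (rule sum.distrib)
    ultimately show ?thesis by linarith
  qed
  have stepE: "(\<Sum>(i,j)\<in>E. 1 + 2 * ln D - CE i j - La i j / D - La j i / D) \<le> A1 + A2"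
  proof -
    have "(\<Sum>(i,j)\<in>E. 1 + 2 * ln D - CE i j - La i j / D - La j i / D - xe_s i j)
        \<le> (\<Sum>(i,j)\<in>E. \<Sum>x<d. \<Sum>y<d. Gamma_e \<eta> Ce lam_s xe_s i j x y)"
      by (rule sE_mono) (unfold CE_def La_def D_def, rule edge_ineq[OF d_pos])
    thus ?thesis unfolding A1_def A2_def by (simp only: sE_diff)
  qed
  have stepV: "(\<Sum>i\<in>{1..n}. 1 + ln D - CV i + (\<Sum>j\<in>nbrs E i. La i j) / D) \<le> B1 + B2"
  proof -
    have "(\<Sum>i\<in>{1..n}. 1 + ln D - CV i + (\<Sum>j\<in>nbrs E i. La i j) / D - xv_s i)
        \<le> (\<Sum>i\<in>{1..n}. \<Sum>x<d. Gamma_v E \<eta> Cv lam_s xv_s i x)"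
      by (rule sum_mono) (unfold CV_def La_def D_def, rule vert_ineq[OF d_pos])
    thus ?thesis unfolding B1_def B2_def by (simp only: sum_subtractf)
  qed
  have canc: "(\<Sum>i\<in>{1..n}. (\<Sum>j\<in>nbrs E i. La i j) / D) = (\<Sum>(i,j)\<in>E. La i j / D + La j i / D)"
    using cancel[OF E_sub no_dup, of La]
    by (simp add: sum_divide_distrib[symmetric] sE_div[symmetric] add_divide_distrib)
  define S' where "S' = (\<Sum>(i,j)\<in>E. ln (Ze i j) - 2 * ln D + CE i j) + (\<Sum>i\<in>{1..n}. ln (Zv i) - ln D + CV i)"
  have main: "?Ls - ?L1 \<le> S'"
  proof -
    have "?Ls - ?L1 \<le> ((\<Sum>(i,j)\<in>E. 1 + ln (Ze i j)) - (\<Sum>(i,j)\<in>E. 1 + 2 * ln D - CE i j - La i j / D - La j i / D))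
        + ((\<Sum>i\<in>{1..n}. 1 + ln (Zv i)) - (\<Sum>i\<in>{1..n}. 1 + ln D - CV i + (\<Sum>j\<in>nbrs E i. La i j) / D))"
      using Ls L1 stepE stepV by linarith
    also have "\<dots> = (\<Sum>(i,j)\<in>E. (ln (Ze i j) - 2 * ln D + CE i j) + (La i j / D + La j i / D))
        + ((\<Sum>i\<in>{1..n}. (ln (Zv i) - ln D + CV i)) - (\<Sum>i\<in>{1..n}. (\<Sum>j\<in>nbrs E i. La i j) / D))"
    proof -
      have "(\<Sum>(i,j)\<in>E. 1 + ln (Ze i j)) - (\<Sum>(i,j)\<in>E. 1 + 2 * ln D - CE i j - La i j / D - La j i / D)
          = (\<Sum>(i,j)\<in>E. (1 + ln (Ze i j)) - (1 + 2 * ln D - CE i j - La i j / D - La j i / D))"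
        by (simp only: sE_diff)
      also have "\<dots> = (\<Sum>(i,j)\<in>E. (ln (Ze i j) - 2 * ln D + CE i j) + (La i j / D + La j i / D))"
        by (rule sum.cong) auto
      finally have 1: "(\<Sum>(i,j)\<in>E. 1 + ln (Ze i j)) - (\<Sum>(i,j)\<in>E. 1 + 2 * ln D - CE i j - La i j / D - La j i / D)
          = (\<Sum>(i,j)\<in>E. (ln (Ze i j) - 2 * ln D + CE i j) + (La i j / D + La j i / D))" .
      have "(\<Sum>i\<in>{1..n}. 1 + ln (Zv i)) - (\<Sum>i\<in>{1..n}. 1 + ln D - CV i + (\<Sum>j\<in>nbrs E i. La i j) / D)
          = (\<Sum>i\<in>{1..n}. (1 + ln (Zv i)) - (1 + ln D - CV i + (\<Sum>j\<in>nbrs E i. La i j) / D))"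
        by (simp only: sum_subtractf)
      also have "\<dots> = (\<Sum>i\<in>{1..n}. (ln (Zv i) - ln D + CV i) - (\<Sum>j\<in>nbrs E i. La i j) / D)"
        by (rule sum.cong) auto
      also have "\<dots> = (\<Sum>i\<in>{1..n}. (ln (Zv i) - ln D + CV i)) - (\<Sum>i\<in>{1..n}. (\<Sum>j\<in>nbrs E i. La i j) / D)"
        by (simp only: sum_subtractf)
      finally show ?thesis using 1 by simp
    qed
    also have "\<dots> = S'"
      unfolding S'_def canc sE_add by simp
    finally show ?thesis .
  qed
  have lnD: "ln D \<ge> 0" using Dp by simp
  have S1: "S' \<le> S_term n E d \<eta> Ce Cv"
  proof -
    have "(\<Sum>(i,j)\<in>E. ln (Ze i j) - 2 * ln D + CE i j) \<le> (\<Sum>(i,j)\<in>E. ln (Ze i j) + CE i j)"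
      by (rule sE_mono) (use lnD in simp)
    moreover have "(\<Sum>i\<in>{1..n}. ln (Zv i) - ln D + CV i) \<le> (\<Sum>i\<in>{1..n}. ln (Zv i) + CV i)"
      by (rule sum_mono) (use lnD in simp)
    ultimately show ?thesis unfolding S'_def S_term_def Ze_def CE_def Zv_def CV_def by linarith
  qed
  have S2: "S' \<le> norm1_term n E d \<eta> Ce Cv"
  proof -
    have "ln (Ze i j) - 2 * ln D + CE i j \<le> (\<Sum>x<d. \<Sum>y<d. \<bar>\<eta> * Ce i j x y / real d + exp (- \<eta> * Ce i j x y)\<bar>)" for i j
    proof -
      have "ln (Ze i j) - 2 * ln D = ln (Ze i j / D^2)"
        using Zep[of i j] Dp by (simp add: ln_div ln_realpow)
      also have "\<dots> \<le> Ze i j / D^2 - 1" using Zep[of i j] Dp by (intro ln_le_minus_one) auto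
      finally have a: "ln (Ze i j) - 2 * ln D \<le> Ze i j / D^2 - 1" .
      have b: "Ze i j / D^2 + CE i j = (\<Sum>x<d. \<Sum>y<d. (exp (- (\<eta> * Ce i j x y)) + \<eta> * Ce i j x y) / D^2)"
        unfolding Ze_def CE_def D_def by (simp add: sum_divide_distrib sum.distrib add_divide_distrib)
      have c: "(\<Sum>x<d. \<Sum>y<d. (exp (- (\<eta> * Ce i j x y)) + \<eta> * Ce i j x y) / D^2)
          \<le> (\<Sum>x<d. \<Sum>y<d. \<bar>\<eta> * Ce i j x y / real d + exp (- \<eta> * Ce i j x y)\<bar>)"
        apply (intro sum_mono)
        using entry[of D "D^2"] Dp unfolding D_def by (simp add: power2_eq_square)
      show ?thesis using a b c by linarith
    qed
    hence "(\<Sum>(i,j)\<in>E. ln (Ze i j) - 2 * ln D + CE i j) \<le> (\<Sum>(i, j)\<in>E. \<Sum>x<d. \<Sum>y<d. \<bar>\<eta> * Ce i j x y / real d + exp (- \<eta> * Ce i j x y)\<bar>)"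
      by (intro sE_mono)
    moreover have "ln (Zv i) - ln D + CV i \<le> (\<Sum>x<d. \<bar>\<eta> * Cv i x / real d + exp (- \<eta> * Cv i x)\<bar>)" for i
    proof -
      have "ln (Zv i) - ln D = ln (Zv i / D)"
        using Zvp[of i] Dp by (simp add: ln_div)
      also have "\<dots> \<le> Zv i / D - 1" using Zvp[of i] Dp by (intro ln_le_minus_one) auto
      finally have a: "ln (Zv i) - ln D \<le> Zv i / D - 1" .
      have b: "Zv i / D + CV i = (\<Sum>x<d. (exp (- (\<eta> * Cv i x)) + \<eta> * Cv i x) / D)"
        unfolding Zv_def CV_def D_def by (simp add: sum_divide_distrib sum.distrib add_divide_distrib)
      have c: "(\<Sum>x<d. (exp (- (\<eta> * Cv i x)) + \<eta> * Cv i x) / D)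
          \<le> (\<Sum>x<d. \<bar>\<eta> * Cv i x / real d + exp (- \<eta> * Cv i x)\<bar>)"
        apply (intro sum_mono)
        using entry[of D D] Dp unfolding D_def by simp
      show ?thesis using a b c by linarith
    qed
    hence "(\<Sum>i\<in>{1..n}. ln (Zv i) - ln D + CV i) \<le> (\<Sum>i\<in>{1..n}. \<Sum>x<d. \<bar>\<eta> * Cv i x / real d + exp (- \<eta> * Cv i x)\<bar>)"
      by (intro sum_mono)
    ultimately show ?thesis unfolding S'_def norm1_term_def by linarith
  qed
  show ?thesis using main S1 S2 by simp
qed

end
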